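(* Let $\tilde X^1,\tilde X^2,\tilde X^3$ be the restrictions to the unit sphere $S^2\subset\mathbb{R}^3$ of the Cartesian coordinate functions, and on $S^2\setminus\{(0,0,1)\}$ define the complex-valued functions $Z=\dfrac{\tilde X^1+i\tilde X^2}{1-\tilde X^3}$, $\bar Z=\dfrac{\tilde X^1-i\tilde X^2}{1-\tilde X^3}$, and the complex vector field $\mathring Y^A=(\epsilon^{CD}\nabla_CZ\nabla_D\bar Z)^{-1}\epsilon^{AB}\nabla_B\bar Z$. For an integer $m$, let $Y^A=Z^{m+1}\mathring Y^A$. Then \[(\Delta+2)\nabla_AY^A=0\quad\text{on }S^2\setminus\{(0,0,1)\}.\]
   Context: $S^2$ carries the round metric $\sigma_{AB}$ induced from $\mathbb{R}^3$, with area form $\epsilon_{AB}$, Levi-Civita connection $\nabla$ and Laplacian $\Delta$ (extended complex-linearly to complex-valued functions and fields); indices raised/lowered with $\sigma$. *)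

theory Defs
  imports "HOL-Analysis.Analysis"
begin

text \<open>Complex-valued functions on (open subsets of) S2 are represented by functions
  real^3 => complex; only their values on S2 matter, since every operator below first
  extends them radially (degree-0 homogeneous extension).  Tangent vectors of S2 at x
  are vectors of R3 orthogonal to x (complexified: complex^3).  Metric sigma is the
  induced one, so raising/lowering indices is the identity on tangent vectors.\<close>

definition S2 :: "(real^3) set" where
  "S2 = sphere 0 1"

definition north :: "real^3" where
  "north = (\<chi> i. if i = 3 then 1 else 0)"

definition south :: "real^3" where
  "south = (\<chi> i. if i = 3 then -1 else 0)"

definition rext :: "(real^3 \<Rightarrow> 'b) \<Rightarrow> real^3 \<Rightarrow> 'b" where
  "rext f y = f (y /\<^sub>R norm y)"

definition pd :: "3 \<Rightarrow> (real^3 \<Rightarrow> complex) \<Rightarrow> real^3 \<Rightarrow> complex" where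
  "pd j F x = frechet_derivative F (at x) (axis j 1)"

definition tproj :: "real^3 \<Rightarrow> 3 \<Rightarrow> 3 \<Rightarrow> real" where
  "tproj x i j = (if i = j then 1 else 0) - x$i * x$j"

definition sgrad :: "(real^3 \<Rightarrow> complex) \<Rightarrow> real^3 \<Rightarrow> complex^3" where
  "sgrad f x = (\<chi> i. \<Sum>j\<in>UNIV. complex_of_real (tproj x i j) * pd j (rext f) x)"

definition sdiv :: "(real^3 \<Rightarrow> complex^3) \<Rightarrow> real^3 \<Rightarrow> complex" where
  "sdiv V x = (\<Sum>i\<in>UNIV. \<Sum>j\<in>UNIV.
      complex_of_real (tproj x i j) * pd j (rext (\<lambda>y. V y $ i)) x)"

definition slap :: "(real^3 \<Rightarrow> complex) \<Rightarrow> real^3 \<Rightarrow> complex" where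
  "slap f x = sdiv (sgrad f) x"

definition ccross :: "complex^3 \<Rightarrow> complex^3 \<Rightarrow> complex^3" where
  "ccross a b = (\<chi> i. if i = 1 then a$2 * b$3 - a$3 * b$2
                      else if i = 2 then a$3 * b$1 - a$1 * b$3
                      else a$1 * b$2 - a$2 * b$1)"

definition cvec :: "real^3 \<Rightarrow> complex^3" where
  "cvec x = (\<chi> i. complex_of_real (x$i))"

definition cdot :: "complex^3 \<Rightarrow> complex^3 \<Rightarrow> complex" where
  "cdot a b = (\<Sum>i\<in>UNIV. a$i * b$i)"

definition cscale :: "complex \<Rightarrow> complex^3 \<Rightarrow> complex^3" where
  "cscale c v = (\<chi> i. c * v$i)"

text \<open>area form (outward orientation): eps^{AB} a_A b_B = x . (a x b),
  and the vector eps^{AB} b_B is b x x\<close>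
definition epsform :: "real^3 \<Rightarrow> complex^3 \<Rightarrow> complex^3 \<Rightarrow> complex" where
  "epsform x a b = cdot (cvec x) (ccross a b)"

definition epsvec :: "real^3 \<Rightarrow> complex^3 \<Rightarrow> complex^3" where
  "epsvec x b = ccross b (cvec x)"

definition Zf :: "real^3 \<Rightarrow> complex" where
  "Zf x = (complex_of_real (x$1) + \<i> * complex_of_real (x$2)) / complex_of_real (1 - x$3)"

definition Zbf :: "real^3 \<Rightarrow> complex" where
  "Zbf x = (complex_of_real (x$1) - \<i> * complex_of_real (x$2)) / complex_of_real (1 - x$3)"

definition Yring :: "real^3 \<Rightarrow> complex^3" where
  "Yring x = cscale (inverse (epsform x (sgrad Zf x) (sgrad Zbf x))) (epsvec x (sgrad Zbf x))"

definition Yfield :: "int \<Rightarrow> real^3 \<Rightarrow> complex^3" where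
  "Yfield m x = cscale (Zf x powi (m + 1)) (Yring x)"

end

theory Submission
  imports Defs
begin


definition G :: "(real^3 \<Rightarrow> complex) \<Rightarrow> complex^3 \<Rightarrow> real^3 \<Rightarrow> bool" where
  "G F g y \<longleftrightarrow> (F has_derivative (\<lambda>v. cdot (cvec v) g)) (at y)"

definition Pj :: "real^3 \<Rightarrow> complex^3 \<Rightarrow> complex^3" where
  "Pj y g = (\<chi> i. g$i - complex_of_real (y$i) * cdot (cvec y) g)"

definition nearS :: "(real^3 \<Rightarrow> 'a) \<Rightarrow> (real^3 \<Rightarrow> 'a) \<Rightarrow> real^3 \<Rightarrow> bool" where
  "nearS f F y \<longleftrightarrow> (\<exists>e>0. \<forall>z\<in>S2. dist z y < e \<longrightarrow> f z = F z)"

lemma vec_nth_has_derivative[derivative_intros]: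
  "((\<lambda>z. z $ i) has_derivative (\<lambda>v. v $ i)) F"
  by (rule bounded_linear.has_derivative[OF bounded_linear_vec_nth]) (rule has_derivative_ident)

lemma S2_norm: "y \<in> S2 \<Longrightarrow> norm y = 1"
  by (simp add: S2_def)

lemma S2_rel: "y \<in> S2 \<Longrightarrow> (y$1)^2 + (y$2)^2 + (y$3)^2 = 1"
proof -
  assume "y \<in> S2"
  then have "norm y = 1" by (rule S2_norm)
  then have "(norm y)^2 = 1" by simp
  then show ?thesis unfolding norm_vec_def L2_set_def
    by (simp add: sum_3)
qed

lemma S2_relc: "y \<in> S2 \<Longrightarrow> (complex_of_real (y$1))^2 + (complex_of_real (y$2))^2 + (complex_of_real (y$3))^2 = 1"
proof -
  assume "y \<in> S2"
  then have "(y$1)^2 + (y$2)^2 + (y$3)^2 = 1" by (rule S2_rel)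
  then have "complex_of_real ((y$1)^2 + (y$2)^2 + (y$3)^2) = 1" by simp
  then show ?thesis by simp
qed

lemma cdot_cvec_axis: "cdot (cvec (axis j 1 - (y$j) *\<^sub>R y)) g = g$j - complex_of_real (y$j) * cdot (cvec y) g"
  using exhaust_3[of j] by (auto simp: cdot_def cvec_def sum_3 axis_def algebra_simps)

lemma normalize_deriv:
  assumes "norm y = 1"
  shows "((\<lambda>z. z /\<^sub>R norm z) has_derivative (\<lambda>v. v - (y \<bullet> v) *\<^sub>R y)) (at y)"
proof -
  have y0: "y \<noteq> 0" using assms by auto
  have sg: "sgn y = y" using assms by (simp add: sgn_div_norm)
  have "((\<lambda>z. inverse (norm z) *\<^sub>R z) has_derivative
     (\<lambda>v. inverse (norm y) *\<^sub>R v + (- (inverse (norm y) * (v \<bullet> sgn y) * inverse (norm y))) *\<^sub>R y)) (at y)"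
    by (rule derivative_eq_intros has_derivative_norm[OF y0] has_derivative_ident | simp add: y0)+
  then show ?thesis using assms sg by (simp add: inner_commute divide_inverse_commute scaleR_conv_of_real algebra_simps)
qed

lemma cvec_diff: "cvec (a - b) = cvec a - cvec b"
  by (simp add: cvec_def vec_eq_iff)
lemma cvec_scale: "cvec (c *\<^sub>R a) = (\<chi> i. complex_of_real c * cvec a $ i)"
  by (simp add: cvec_def vec_eq_iff)

lemma pd_rext:
  assumes y: "y \<in> S2" and G: "G F g y" and near: "nearS f F y"
  shows "pd j (rext f) y = Pj y g $ j"
proof -
  have ny: "norm y = 1" using y by (rule S2_norm)
  obtain e where e: "e > 0" "\<And>z. z \<in> S2 \<Longrightarrow> dist z y < e \<Longrightarrow> f z = F z"
    using near unfolding nearS_def by blast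
  have D: "((\<lambda>z. F (z /\<^sub>R norm z)) has_derivative (\<lambda>v. cdot (cvec (v - (y \<bullet> v) *\<^sub>R y)) g)) (at y)"
  proof -
    have "(F has_derivative (\<lambda>v. cdot (cvec v) g)) (at (y /\<^sub>R norm y))"
      using G ny by (simp add: G_def)
    from has_derivative_compose[OF normalize_deriv[OF ny] this] show ?thesis by simp
  qed
  have D2: "(rext f has_derivative (\<lambda>v. cdot (cvec (v - (y \<bullet> v) *\<^sub>R y)) g)) (at y within UNIV)"
  proof (rule has_derivative_transform_within[OF D, of "min (e/2) (1/2)"])
    show "0 < min (e/2) (1/2)" using e by simp
    show "y \<in> UNIV" by simp
    fix z :: "real^3" assume "dist z y < min (e/2) (1/2)"
    then have dz: "dist z y < e/2" "dist z y < 1/2" by auto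
    have "norm z \<ge> 1/2"
      using norm_triangle_ineq2[of y z] dz ny by (simp add: dist_norm norm_minus_commute)
    then have nz: "norm z > 0" by linarith
    have "z /\<^sub>R norm z \<in> S2" using nz by (simp add: S2_def)
    moreover have "dist (z /\<^sub>R norm z) y < e"
    proof -
      have "z /\<^sub>R norm z - z = (1 / norm z - 1) *\<^sub>R z" by (simp add: scaleR_diff_left inverse_eq_divide)
      then have "norm (z /\<^sub>R norm z - z) = \<bar>1 / norm z - 1\<bar> * norm z" by simp
      also have "\<dots> = \<bar>(1 / norm z - 1) * norm z\<bar>" using nz by (simp add: abs_mult)
      also have "(1 / norm z - 1) * norm z = 1 - norm z" using nz by (simp add: field_simps)
      finally have e1: "norm (z /\<^sub>R norm z - z) = \<bar>1 - norm z\<bar>" .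
      have e2: "\<bar>1 - norm z\<bar> \<le> dist z y"
        using norm_triangle_ineq3[of y z] ny by (simp add: dist_norm norm_minus_commute)
      have "norm (z /\<^sub>R norm z - z) \<le> dist z y" using e1 e2 by simp
      moreover have "dist (z /\<^sub>R norm z) y \<le> norm (z /\<^sub>R norm z - z) + dist z y"
        using dist_triangle[of "z /\<^sub>R norm z" y z] by (simp add: dist_norm)
      ultimately show ?thesis using dz by linarith
    qed
    ultimately show "F (z /\<^sub>R norm z) = rext f z"
      using e(2) unfolding rext_def by metis
  qed
  have fd: "frechet_derivative (rext f) (at y) = (\<lambda>v. cdot (cvec (v - (y \<bullet> v) *\<^sub>R y)) g)"
    using frechet_derivative_at[OF D2] by simp
  have "pd j (rext f) y = cdot (cvec (axis j 1 - (y \<bullet> axis j 1) *\<^sub>R y)) g"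
    unfolding pd_def fd by simp
  also have "\<dots> = Pj y g $ j"
    by (simp add: inner_axis cdot_cvec_axis Pj_def)
  finally show ?thesis .
qed



lemma cdot_add: "cdot v (a + b) = cdot v a + cdot v b"
  by (simp add: cdot_def sum.distrib distrib_left)
lemma cdot_diff: "cdot v (a - b) = cdot v a - cdot v b"
  by (simp add: cdot_def sum_subtractf right_diff_distrib)
lemma cdot_scale: "cdot v (cscale c a) = c * cdot v a"
  by (simp add: cdot_def cscale_def sum_distrib_left mult.left_commute)
lemma cdot_zero: "cdot v 0 = 0"
  by (simp add: cdot_def)

lemma G_cong: "G F g y \<Longrightarrow> g = g' \<Longrightarrow> G F g' y" by simp

lemma G_const: "G (\<lambda>z. c) 0 y"
  unfolding G_def cdot_zero by (rule has_derivative_const)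

lemma G_coord: "G (\<lambda>z. complex_of_real (z$k)) (\<chi> i. if i = k then 1 else 0) y"
proof -
  have "((\<lambda>z. complex_of_real (z$k)) has_derivative (\<lambda>v. complex_of_real (v$k))) (at y)"
    by (auto intro!: derivative_eq_intros)
  moreover have "(\<lambda>v. complex_of_real (v$k)) = (\<lambda>v. cdot (cvec v) (\<chi> i. if i = k then 1 else 0))"
    by (auto simp: cdot_def cvec_def fun_eq_iff if_distrib cong: if_cong)
  ultimately show ?thesis unfolding G_def by simp
qed

lemma G_add: "G f a y \<Longrightarrow> G g b y \<Longrightarrow> G (\<lambda>z. f z + g z) (a + b) y"
  unfolding G_def cdot_add by (rule has_derivative_add)

lemma G_diff: "G f a y \<Longrightarrow> G g b y \<Longrightarrow> G (\<lambda>z. f z - g z) (a - b) y"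
  unfolding G_def cdot_diff by (rule has_derivative_diff)

lemma G_mult: "G f a y \<Longrightarrow> G g b y \<Longrightarrow> G (\<lambda>z. f z * g z) (cscale (f y) b + cscale (g y) a) y"
  unfolding G_def cdot_add cdot_scale
  by (drule (1) has_derivative_mult) (simp add: mult.commute)

lemma G_cmult: "G g b y \<Longrightarrow> G (\<lambda>z. c * g z) (cscale c b) y"
  unfolding G_def cdot_scale
  by (rule has_derivative_mult_right)

lemma G_comp:
  assumes "(h has_field_derivative d) (at (f y))" "G f a y"
  shows "G (\<lambda>z. h (f z)) (cscale d a) y"
proof -
  have "(h has_derivative (*) d) (at (f y))"
    using assms(1) by (simp add: has_field_derivative_def)
  from has_derivative_compose[OF assms(2)[unfolded G_def] this]
  show ?thesis unfolding G_def cdot_scale by simp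
qed

lemma G_inverse:
  assumes "G f a y" "f y \<noteq> 0"
  shows "G (\<lambda>z. inverse (f z)) (cscale (-(inverse (f y) * inverse (f y))) a) y"
proof -
  have "(inverse has_field_derivative (-(inverse (f y) * inverse (f y)))) (at (f y))"
    using DERIV_inverse[OF assms(2)] by (simp add: power2_eq_square)
  from G_comp[OF this assms(1)] show ?thesis .
qed

lemma Pj_idem:
  assumes "y \<in> S2"
  shows "(\<Sum>j\<in>UNIV. complex_of_real (tproj y i j) * Pj y g $ j) = Pj y g $ i"
proof -
  have r: "(complex_of_real (y$1))^2 + (complex_of_real (y$2))^2 + (complex_of_real (y$3))^2 = 1"
    using S2_relc[OF assms] .
  have "\<forall>i. (\<Sum>j\<in>UNIV. complex_of_real (tproj y i j) * Pj y g $ j) = Pj y g $ i"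
    unfolding forall_3 using r
    by (auto simp: tproj_def Pj_def cdot_def cvec_def sum_3) algebra+
  then show ?thesis by blast
qed

lemma sgrad_eq:
  assumes "y \<in> S2" "G F g y" "nearS f F y"
  shows "sgrad f y = Pj y g"
  unfolding sgrad_def vec_eq_iff
  using pd_rext[OF assms] Pj_idem[OF assms(1)] by simp

lemma nearS_nth: "nearS V F y \<Longrightarrow> nearS (\<lambda>z. V z $ i) (\<lambda>z. F z $ i) y"
  unfolding nearS_def by metis

lemma sdiv_eq:
  assumes "y \<in> S2" "\<And>i. G (\<lambda>z. F z $ i) (gs i) y" "nearS V F y"
  shows "sdiv V y = (\<Sum>i\<in>UNIV. Pj y (gs i) $ i)"
  unfolding sdiv_def
  using pd_rext[OF assms(1) assms(2) nearS_nth[OF assms(3)]] Pj_idem[OF assms(1)] by simp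



definition ww :: "real^3 \<Rightarrow> complex" where "ww z = 1 - complex_of_real (z$3)"
definition uu :: "real^3 \<Rightarrow> complex" where "uu z = complex_of_real (z$1) + \<i> * complex_of_real (z$2)"
definition ub :: "real^3 \<Rightarrow> complex" where "ub z = complex_of_real (z$1) - \<i> * complex_of_real (z$2)"
definition ek :: "3 \<Rightarrow> complex^3" where "ek k = (\<chi> i. if i = k then 1 else 0)"

definition gZ :: "real^3 \<Rightarrow> complex^3" where
  "gZ y = vector [1 / ww y, \<i> / ww y, uu y / (ww y)^2]"
definition gZb :: "real^3 \<Rightarrow> complex^3" where
  "gZb y = vector [1 / ww y, - \<i> / ww y, ub y / (ww y)^2]"

lemma ek_nth[simp]: "ek 1 $ 1 = 1" "ek 1 $ 2 = 0" "ek 1 $ 3 = 0"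
   "ek 2 $ 1 = 0" "ek 2 $ 2 = 1" "ek 2 $ 3 = 0" "ek 3 $ 1 = 0" "ek 3 $ 2 = 0" "ek 3 $ 3 = 1"
  by (simp_all add: ek_def)

lemma cscale_nth[simp]: "cscale c v $ i = c * v $ i"
  by (simp add: cscale_def)

lemma ww_nz: assumes "y \<in> S2" "y \<noteq> north" shows "ww y \<noteq> 0"
proof
  assume "ww y = 0"
  then have 3: "y$3 = 1" unfolding ww_def by (metis eq_iff_diff_eq_0 of_real_eq_1_iff)
  have "(y$1)^2 + (y$2)^2 = 0" using S2_rel[OF assms(1)] 3 by simp
  then have "y$1 = 0" "y$2 = 0" by (simp_all add: sum_power2_eq_zero_iff)
  then have "y = north" using 3 unfolding north_def vec_eq_iff forall_3 by simp
  then show False using assms by simp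
qed

lemma G_X: "G (\<lambda>z. complex_of_real (z$k)) (ek k) y"
  unfolding ek_def by (rule G_coord)

lemma G_ww: "G ww (- ek 3) y"
proof -
  have "G (\<lambda>z. 1 - complex_of_real (z$3)) (0 - ek 3) y" by (rule G_diff[OF G_const G_X])
  then show ?thesis unfolding ww_def[abs_def] by simp
qed

lemma G_uu: "G uu (ek 1 + cscale \<i> (ek 2)) y"
  unfolding uu_def[abs_def] by (rule G_add[OF G_X G_cmult[OF G_X]])

lemma G_ub: "G ub (ek 1 - cscale \<i> (ek 2)) y"
  unfolding ub_def[abs_def] by (rule G_diff[OF G_X G_cmult[OF G_X]])

lemma Zf_eq: "Zf = (\<lambda>z. uu z * inverse (ww z))"
  by (simp add: fun_eq_iff Zf_def uu_def ww_def divide_inverse)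
lemma Zbf_eq: "Zbf = (\<lambda>z. ub z * inverse (ww z))"
  by (simp add: fun_eq_iff Zbf_def ub_def ww_def divide_inverse)

lemma G_Zf: assumes "ww y \<noteq> 0" shows "G Zf (gZ y) y"
proof -
  have "G (\<lambda>z. uu z * inverse (ww z))
     (cscale (uu y) (cscale (-(inverse (ww y) * inverse (ww y))) (- ek 3)) + cscale (inverse (ww y)) (ek 1 + cscale \<i> (ek 2))) y"
    by (rule G_mult[OF G_uu G_inverse[OF G_ww assms]])
  then show ?thesis unfolding Zf_eq
    by (rule G_cong) (simp add: vec_eq_iff forall_3 gZ_def field_simps power2_eq_square assms)
qed

lemma G_Zbf: assumes "ww y \<noteq> 0" shows "G Zbf (gZb y) y"
proof -
  have "G (\<lambda>z. ub z * inverse (ww z))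
     (cscale (ub y) (cscale (-(inverse (ww y) * inverse (ww y))) (- ek 3)) + cscale (inverse (ww y)) (ek 1 - cscale \<i> (ek 2))) y"
    by (rule G_mult[OF G_ub G_inverse[OF G_ww assms]])
  then show ?thesis unfolding Zbf_eq
    by (rule G_cong) (simp add: vec_eq_iff forall_3 gZb_def field_simps power2_eq_square assms)
qed

lemma nearS_refl: "nearS f f y"
  unfolding nearS_def by (rule exI[of _ 1]) simp

lemma nearS_open: "open U \<Longrightarrow> y \<in> U \<Longrightarrow> (\<And>z. z \<in> S2 \<Longrightarrow> z \<in> U \<Longrightarrow> f z = F z) \<Longrightarrow> nearS f F y"
  unfolding nearS_def open_dist by (metis dist_commute)

lemma sgrad_Zf: "y \<in> S2 \<Longrightarrow> ww y \<noteq> 0 \<Longrightarrow> sgrad Zf y = Pj y (gZ y)"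
  by (rule sgrad_eq[OF _ G_Zf nearS_refl])
lemma sgrad_Zbf: "y \<in> S2 \<Longrightarrow> ww y \<noteq> 0 \<Longrightarrow> sgrad Zbf y = Pj y (gZb y)"
  by (rule sgrad_eq[OF _ G_Zbf nearS_refl])

lemma epsform_Pj: "epsform y (Pj y a) (Pj y b) = epsform y a b"
  by (simp add: epsform_def Pj_def cdot_def ccross_def cvec_def sum_3) algebra

lemma epsvec_Pj: "epsvec y (Pj y b) = epsvec y b"
  by (simp add: epsvec_def Pj_def cdot_def ccross_def cvec_def sum_3 vec_eq_iff forall_3) algebra



definition Yp :: "real^3 \<Rightarrow> complex^3" where
  "Yp y = vector [(- complex_of_real (y$3) * ww y + \<i> * ub y * complex_of_real (y$2)) / 2,
                  (- \<i> * ub y * complex_of_real (y$1) + \<i> * complex_of_real (y$3) * ww y) / 2,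
                  ww y * ub y / 2]"

lemma ii: "\<i> * \<i> = -1" by simp

lemma eps_val:
  assumes y: "y \<in> S2" and w: "ww y \<noteq> 0"
  shows "epsform y (gZ y) (gZb y) = 2 * \<i> / (ww y)^2"
proof -
  have r: "(complex_of_real (y$1))^2 + (complex_of_real (y$2))^2 + (complex_of_real (y$3))^2 = 1"
    using S2_relc[OF y] .
  have c: "complex_of_real (y$3) = 1 - ww y" by (simp add: ww_def)
  show ?thesis
    using r c w ii
    by (simp add: epsform_def cdot_def ccross_def cvec_def sum_3 gZ_def gZb_def uu_def ub_def field_simps) algebra
qed

lemma Yring_eq:
  assumes y: "y \<in> S2" and w: "ww y \<noteq> 0"
  shows "Yring y = Yp y"
proof -
  have r: "(complex_of_real (y$1))^2 + (complex_of_real (y$2))^2 + (complex_of_real (y$3))^2 = 1"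
    using S2_relc[OF y] .
  have c: "complex_of_real (y$3) = 1 - ww y" by (simp add: ww_def)
  have "Yring y = cscale (inverse (2 * \<i> / (ww y)^2)) (epsvec y (gZb y))"
    unfolding Yring_def sgrad_Zf[OF y w] sgrad_Zbf[OF y w] epsform_Pj epsvec_Pj eps_val[OF y w] ..
  also have "\<dots> = Yp y"
    using r c w ii
    by (simp add: vec_eq_iff forall_3 epsvec_def ccross_def cvec_def gZb_def Yp_def uu_def ub_def field_simps)
       (simp add: algebra_simps power4_eq_xxxx power2_eq_square)
  finally show ?thesis .
qed



lemma Pj_add: "Pj y (a + b) = Pj y a + Pj y b"
  by (simp add: Pj_def vec_eq_iff cdot_add algebra_simps)
lemma Pj_diff: "Pj y (a - b) = Pj y a - Pj y b"
  by (simp add: Pj_def vec_eq_iff cdot_diff algebra_simps)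
lemma Pj_scale: "Pj y (cscale c a) = cscale c (Pj y a)"
  by (simp add: Pj_def vec_eq_iff cdot_scale algebra_simps)

lemma G_divc: "G f a y \<Longrightarrow> G (\<lambda>z. f z / c) (cscale (inverse c) a) y"
proof -
  assume "G f a y"
  then have "G (\<lambda>z. inverse c * f z) (cscale (inverse c) a) y" by (rule G_cmult)
  then show ?thesis by (simp add: divide_inverse mult.commute)
qed

lemma G_uminus: "G f a y \<Longrightarrow> G (\<lambda>z. - f z) (- a) y"
proof -
  assume "G f a y"
  then have "G (\<lambda>z. 0 - f z) (0 - a) y" by (rule G_diff[OF G_const])
  then show ?thesis by simp
qed

lemmas Grules = G_uminus G_add G_diff G_mult G_cmult G_divc G_X G_const G_ww G_ub G_uu

definition gYp :: "real^3 \<Rightarrow> 3 \<Rightarrow> complex^3" where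
  "gYp y i = (if i = 1 then vector [\<i> * complex_of_real (y$2) / 2, (\<i> * complex_of_real (y$1) + 2 * complex_of_real (y$2)) / 2, (2 * complex_of_real (y$3) - 1) / 2]
     else if i = 2 then vector [(-2 * \<i> * complex_of_real (y$1) - complex_of_real (y$2)) / 2, - complex_of_real (y$1) / 2, (\<i> - 2 * \<i> * complex_of_real (y$3)) / 2]
     else vector [ww y / 2, - \<i> * ww y / 2, - ub y / 2])"

lemma G_Yp1: "G (\<lambda>z. Yp z $ 1) (gYp y 1) y"
proof -
  have e: "(\<lambda>z. Yp z $ 1) = (\<lambda>z. (- complex_of_real (z$3) * ww z + \<i> * ub z * complex_of_real (z$2)) / 2)"
    by (simp add: Yp_def)
  show ?thesis unfolding e
    by (rule G_cong, (rule Grules)+) (simp add: vec_eq_iff forall_3 gYp_def ww_def ub_def field_simps)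
qed

lemma G_Yp2: "G (\<lambda>z. Yp z $ 2) (gYp y 2) y"
proof -
  have e: "(\<lambda>z. Yp z $ 2) = (\<lambda>z. (- \<i> * ub z * complex_of_real (z$1) + \<i> * complex_of_real (z$3) * ww z) / 2)"
    by (simp add: Yp_def)
  show ?thesis unfolding e
    by (rule G_cong, (rule Grules)+) (simp add: vec_eq_iff forall_3 gYp_def ww_def ub_def field_simps)
qed

lemma G_Yp3: "G (\<lambda>z. Yp z $ 3) (gYp y 3) y"
proof -
  have e: "(\<lambda>z. Yp z $ 3) = (\<lambda>z. ww z * ub z / 2)"
    by (simp add: Yp_def)
  show ?thesis unfolding e
    by (rule G_cong, (rule Grules)+) (simp add: vec_eq_iff forall_3 gYp_def ww_def ub_def field_simps)
qed

lemma G_Yp: "G (\<lambda>z. Yp z $ i) (gYp y i) y"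
  using exhaust_3[of i] G_Yp1 G_Yp2 G_Yp3 by auto

lemma I1:
  assumes y: "y \<in> S2" and w: "ww y \<noteq> 0"
  shows "(\<Sum>i\<in>UNIV. Yp y $ i * Pj y (gZ y) $ i) = 1"
proof -
  have r: "(complex_of_real (y$1))^2 + (complex_of_real (y$2))^2 + (complex_of_real (y$3))^2 = 1"
    using S2_relc[OF y] .
  have c: "complex_of_real (y$3) = 1 - ww y" by (simp add: ww_def)
  show ?thesis
    using r c w ii
    by (simp add: sum_3 Yp_def Pj_def cdot_def cvec_def gZ_def uu_def ub_def field_simps) algebra
qed

lemma I2:
  assumes y: "y \<in> S2" and w: "ww y \<noteq> 0"
  shows "(\<Sum>i\<in>UNIV. Pj y (gYp y i) $ i) = - ub y"
proof -
  have r: "(complex_of_real (y$1))^2 + (complex_of_real (y$2))^2 + (complex_of_real (y$3))^2 = 1"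
    using S2_relc[OF y] .
  have c: "complex_of_real (y$3) = 1 - ww y" by (simp add: ww_def)
  show ?thesis
    using r c w ii
    by (simp add: sum_3 gYp_def Pj_def cdot_def cvec_def ub_def field_simps) algebra
qed



definition AZ :: "real^3 \<Rightarrow> complex^3" where
  "AZ z = vector [(ww z - uu z * complex_of_real (z$1)) * (inverse (ww z) * inverse (ww z)),
                  (\<i> * ww z - uu z * complex_of_real (z$2)) * (inverse (ww z) * inverse (ww z)),
                  uu z * inverse (ww z)]"

definition Bv :: "real^3 \<Rightarrow> complex^3" where
  "Bv z = vector [1 - ub z * complex_of_real (z$1), - \<i> - ub z * complex_of_real (z$2), - ub z * complex_of_real (z$3)]"

definition gub :: "complex^3" where "gub = ek 1 - cscale \<i> (ek 2)"

definition gAZ :: "real^3 \<Rightarrow> 3 \<Rightarrow> complex^3" where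
  "gAZ y i = (let A = complex_of_real (y$1); B = complex_of_real (y$2); W = ww y; u = uu y in
    if i = 1 then vector [-(2*A + \<i>*B)/W^2, -\<i>*A/W^2, 1/W^2 - 2*u*A/W^3]
    else if i = 2 then vector [-B/W^2, -(A + 2*\<i>*B)/W^2, \<i>/W^2 - 2*u*B/W^3]
    else vector [1/W, \<i>/W, u/W^2])"

definition gBv :: "real^3 \<Rightarrow> 3 \<Rightarrow> complex^3" where
  "gBv y i = (let A = complex_of_real (y$1); B = complex_of_real (y$2); C = complex_of_real (y$3) in
    if i = 1 then vector [-(2*A - \<i>*B), \<i>*A, 0]
    else if i = 2 then vector [-B, -A + 2*\<i>*B, 0]
    else vector [-C, \<i>*C, -ub y])"

lemma G_AZ:
  assumes w: "ww y \<noteq> 0"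
  shows "G (\<lambda>z. AZ z $ i) (gAZ y i) y"
proof -
  have "G (\<lambda>z. AZ z $ 1) (gAZ y 1) y"
  proof -
    have e: "(\<lambda>z. AZ z $ 1) = (\<lambda>z. (ww z - uu z * complex_of_real (z$1)) * (inverse (ww z) * inverse (ww z)))"
      by (simp add: AZ_def)
    show ?thesis unfolding e
      by (rule G_cong, (rule Grules G_inverse w)+) (simp add: vec_eq_iff forall_3 gAZ_def Let_def uu_def field_simps w; (intro conjI disjI2)?; algebra)
  qed
  moreover have "G (\<lambda>z. AZ z $ 2) (gAZ y 2) y"
  proof -
    have e: "(\<lambda>z. AZ z $ 2) = (\<lambda>z. (\<i> * ww z - uu z * complex_of_real (z$2)) * (inverse (ww z) * inverse (ww z)))"
      by (simp add: AZ_def)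
    show ?thesis unfolding e
      by (rule G_cong, (rule Grules G_inverse w)+) (simp add: vec_eq_iff forall_3 gAZ_def Let_def uu_def field_simps w; (intro conjI disjI2)?; algebra)
  qed
  moreover have "G (\<lambda>z. AZ z $ 3) (gAZ y 3) y"
  proof -
    have e: "(\<lambda>z. AZ z $ 3) = (\<lambda>z. uu z * inverse (ww z))"
      by (simp add: AZ_def)
    show ?thesis unfolding e
      by (rule G_cong, (rule Grules G_inverse w)+) (simp add: vec_eq_iff forall_3 gAZ_def Let_def uu_def field_simps w; (intro conjI disjI2)?; algebra)
  qed
  ultimately show ?thesis using exhaust_3[of i] by auto
qed

lemma G_Bv: "G (\<lambda>z. Bv z $ i) (gBv y i) y"
proof -
  have "G (\<lambda>z. Bv z $ 1) (gBv y 1) y"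
  proof -
    have e: "(\<lambda>z. Bv z $ 1) = (\<lambda>z. 1 - ub z * complex_of_real (z$1))"
      by (simp add: Bv_def)
    show ?thesis unfolding e
      by (rule G_cong, (rule Grules)+) (simp add: vec_eq_iff forall_3 gBv_def Let_def ub_def field_simps)
  qed
  moreover have "G (\<lambda>z. Bv z $ 2) (gBv y 2) y"
  proof -
    have e: "(\<lambda>z. Bv z $ 2) = (\<lambda>z. - \<i> - ub z * complex_of_real (z$2))"
      by (simp add: Bv_def)
    show ?thesis unfolding e
      by (rule G_cong, (rule Grules)+) (simp add: vec_eq_iff forall_3 gBv_def Let_def ub_def field_simps)
  qed
  moreover have "G (\<lambda>z. Bv z $ 3) (gBv y 3) y"
  proof -
    have e: "(\<lambda>z. Bv z $ 3) = (\<lambda>z. - ub z * complex_of_real (z$3))"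
      by (simp add: Bv_def)
    show ?thesis unfolding e
      by (rule G_cong, (rule Grules)+) (simp add: vec_eq_iff forall_3 gBv_def Let_def ub_def field_simps)
  qed
  ultimately show ?thesis using exhaust_3[of i] by auto
qed

lemma E1: assumes w: "ww y \<noteq> 0" shows "Pj y (gZ y) = AZ y"
proof -
  have c: "complex_of_real (y$3) = 1 - ww y" by (simp add: ww_def)
  show ?thesis
    by (simp add: vec_eq_iff forall_3 Pj_def cdot_def cvec_def sum_3 gZ_def AZ_def uu_def field_simps c w) algebra+
qed

lemma E2: "Pj y gub = Bv y"
  by (simp add: vec_eq_iff forall_3 Pj_def cdot_def cvec_def sum_3 gub_def Bv_def ub_def algebra_simps)



lemma J_AA:
  assumes y: "y \<in> S2" and w: "ww y \<noteq> 0"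
  shows "(\<Sum>i\<in>UNIV. AZ y $ i * AZ y $ i) = 0"
proof -
  have r: "(complex_of_real (y$1))^2 + (complex_of_real (y$2))^2 + (complex_of_real (y$3))^2 = 1"
    using S2_relc[OF y] .
  have c: "complex_of_real (y$3) = 1 - ww y" by (simp add: ww_def)
  show ?thesis
    using r c w ii
    by (simp add: sum_3 AZ_def uu_def field_simps; (intro conjI disjI2)?; algebra)
qed

lemma J_AB:
  assumes y: "y \<in> S2" and w: "ww y \<noteq> 0"
  shows "(\<Sum>i\<in>UNIV. AZ y $ i * Bv y $ i) = 1"
proof -
  have r: "(complex_of_real (y$1))^2 + (complex_of_real (y$2))^2 + (complex_of_real (y$3))^2 = 1"
    using S2_relc[OF y] .
  have c: "complex_of_real (y$3) = 1 - ww y" by (simp add: ww_def)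
  show ?thesis
    using r c w ii
    by (simp add: sum_3 AZ_def Bv_def uu_def ub_def field_simps; (intro conjI disjI2)?; algebra)
qed

lemma J_divA:
  assumes y: "y \<in> S2" and w: "ww y \<noteq> 0"
  shows "(\<Sum>i\<in>UNIV. Pj y (gAZ y i) $ i) = 0"
proof -
  have r: "(complex_of_real (y$1))^2 + (complex_of_real (y$2))^2 + (complex_of_real (y$3))^2 = 1"
    using S2_relc[OF y] .
  have c: "complex_of_real (y$3) = 1 - ww y" by (simp add: ww_def)
  show ?thesis
    using r c w ii
    by (simp add: sum_3 gAZ_def Let_def Pj_def cdot_def cvec_def uu_def field_simps; (intro conjI disjI2)?; algebra)
qed

lemma J_divB:
  assumes y: "y \<in> S2" and w: "ww y \<noteq> 0"
  shows "(\<Sum>i\<in>UNIV. Pj y (gBv y i) $ i) = - 2 * ub y"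
proof -
  have r: "(complex_of_real (y$1))^2 + (complex_of_real (y$2))^2 + (complex_of_real (y$3))^2 = 1"
    using S2_relc[OF y] .
  show ?thesis
    using r ii
    by (simp add: sum_3 gBv_def Let_def Pj_def cdot_def cvec_def ub_def field_simps; (intro conjI disjI2)?; algebra)
qed



locale hol =
  fixes h h1 h2 h3 :: "complex \<Rightarrow> complex" and U :: "(real^3) set"
  assumes U_open: "open U" and north_U: "north \<notin> U"
    and d0: "\<And>y. y \<in> S2 \<Longrightarrow> y \<in> U \<Longrightarrow> (h has_field_derivative h1 (Zf y)) (at (Zf y))"
    and d1: "\<And>y. y \<in> S2 \<Longrightarrow> y \<in> U \<Longrightarrow> (h1 has_field_derivative h2 (Zf y)) (at (Zf y))"
    and d2: "\<And>y. y \<in> S2 \<Longrightarrow> y \<in> U \<Longrightarrow> (h2 has_field_derivative h3 (Zf y)) (at (Zf y))"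
begin

lemma wU: "y \<in> S2 \<Longrightarrow> y \<in> U \<Longrightarrow> ww y \<noteq> 0"
  using ww_nz north_U by blast

lemma L3:
  assumes y: "y \<in> S2" and yU: "y \<in> U"
  shows "sdiv (\<lambda>y. cscale (h (Zf y)) (Yring y)) y = h1 (Zf y) - h (Zf y) * ub y"
proof -
  have w: "ww y \<noteq> 0" using wU[OF y yU] .
  have near: "nearS (\<lambda>y. cscale (h (Zf y)) (Yring y)) (\<lambda>z. cscale (h (Zf z)) (Yp z)) y"
    by (rule nearS_open[OF U_open yU]) (simp add: Yring_eq wU)
  have Gi: "G (\<lambda>z. cscale (h (Zf z)) (Yp z) $ i)
      (cscale (h (Zf y)) (gYp y i) + cscale (Yp y $ i) (cscale (h1 (Zf y)) (gZ y))) y" for i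
    using G_mult[OF G_comp[OF d0[OF y yU] G_Zf[OF w]] G_Yp] by simp
  have "sdiv (\<lambda>y. cscale (h (Zf y)) (Yring y)) y =
     (\<Sum>i\<in>UNIV. Pj y (cscale (h (Zf y)) (gYp y i) + cscale (Yp y $ i) (cscale (h1 (Zf y)) (gZ y))) $ i)"
    by (rule sdiv_eq[OF y Gi near])
  also have "\<dots> = h (Zf y) * (\<Sum>i\<in>UNIV. Pj y (gYp y i) $ i) + h1 (Zf y) * (\<Sum>i\<in>UNIV. Yp y $ i * Pj y (gZ y) $ i)"
    by (simp add: Pj_add Pj_scale sum.distrib sum_distrib_left algebra_simps)
  also have "\<dots> = h1 (Zf y) - h (Zf y) * ub y"
    using I1[OF y w] I2[OF y w] by simp
  finally show ?thesis .
qed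

lemma L4:
  assumes y: "y \<in> S2" and yU: "y \<in> U"
  shows "sgrad (sdiv (\<lambda>y. cscale (h (Zf y)) (Yring y))) y =
     cscale (h2 (Zf y) - h1 (Zf y) * ub y) (AZ y) - cscale (h (Zf y)) (Bv y)"
proof -
  have w: "ww y \<noteq> 0" using wU[OF y yU] .
  have near: "nearS (sdiv (\<lambda>y. cscale (h (Zf y)) (Yring y))) (\<lambda>z. h1 (Zf z) - h (Zf z) * ub z) y"
    by (rule nearS_open[OF U_open yU]) (simp add: L3)
  have Gg: "G (\<lambda>z. h1 (Zf z) - h (Zf z) * ub z)
     (cscale (h2 (Zf y)) (gZ y) - (cscale (h (Zf y)) gub + cscale (ub y) (cscale (h1 (Zf y)) (gZ y)))) y"
    using G_diff[OF G_comp[OF d1[OF y yU] G_Zf[OF w]] G_mult[OF G_comp[OF d0[OF y yU] G_Zf[OF w]] G_ub]]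
    by (simp add: gub_def)
  have "sgrad (sdiv (\<lambda>y. cscale (h (Zf y)) (Yring y))) y =
     Pj y (cscale (h2 (Zf y)) (gZ y) - (cscale (h (Zf y)) gub + cscale (ub y) (cscale (h1 (Zf y)) (gZ y))))"
    by (rule sgrad_eq[OF y Gg near])
  also have "\<dots> = cscale (h2 (Zf y) - h1 (Zf y) * ub y) (AZ y) - cscale (h (Zf y)) (Bv y)"
    by (simp add: Pj_add Pj_diff Pj_scale E1[OF w] E2 vec_eq_iff algebra_simps)
  finally show ?thesis .
qed

lemma L5:
  assumes x: "x \<in> S2" and xU: "x \<in> U"
  shows "sdiv (sgrad (sdiv (\<lambda>y. cscale (h (Zf y)) (Yring y)))) x = - 2 * (h1 (Zf x) - h (Zf x) * ub x)"
proof -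
  have w: "ww x \<noteq> 0" using wU[OF x xU] .
  define F5 where "F5 = (\<lambda>z. cscale (h2 (Zf z) - h1 (Zf z) * ub z) (AZ z) - cscale (h (Zf z)) (Bv z))"
  have near: "nearS (sgrad (sdiv (\<lambda>y. cscale (h (Zf y)) (Yring y)))) F5 x"
    unfolding F5_def by (rule nearS_open[OF U_open xU]) (simp add: L4)
  define p where "p = h2 (Zf x) - h1 (Zf x) * ub x"
  define gp where "gp = cscale (h3 (Zf x)) (gZ x) - (cscale (h1 (Zf x)) gub + cscale (ub x) (cscale (h2 (Zf x)) (gZ x)))"
  have Gp: "G (\<lambda>z. h2 (Zf z) - h1 (Zf z) * ub z) gp x"
    unfolding gp_def
    using G_diff[OF G_comp[OF d2[OF x xU] G_Zf[OF w]] G_mult[OF G_comp[OF d1[OF x xU] G_Zf[OF w]] G_ub]]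
    by (simp add: gub_def)
  have Gi: "G (\<lambda>z. F5 z $ i)
      ((cscale p (gAZ x i) + cscale (AZ x $ i) gp) - (cscale (h (Zf x)) (gBv x i) + cscale (Bv x $ i) (cscale (h1 (Zf x)) (gZ x)))) x" for i
    using G_diff[OF G_mult[OF Gp G_AZ[OF w]] G_mult[OF G_comp[OF d0[OF x xU] G_Zf[OF w]] G_Bv]]
    unfolding F5_def p_def by simp
  have "sdiv (sgrad (sdiv (\<lambda>y. cscale (h (Zf y)) (Yring y)))) x =
    (\<Sum>i\<in>UNIV. Pj x ((cscale p (gAZ x i) + cscale (AZ x $ i) gp) - (cscale (h (Zf x)) (gBv x i) + cscale (Bv x $ i) (cscale (h1 (Zf x)) (gZ x)))) $ i)"
    by (rule sdiv_eq[OF x Gi near])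
  also have "\<dots> = p * (\<Sum>i\<in>UNIV. Pj x (gAZ x i) $ i) + (h3 (Zf x) - ub x * h2 (Zf x)) * (\<Sum>i\<in>UNIV. AZ x $ i * AZ x $ i)
      - h1 (Zf x) * (\<Sum>i\<in>UNIV. AZ x $ i * Bv x $ i) - h (Zf x) * (\<Sum>i\<in>UNIV. Pj x (gBv x i) $ i)
      - h1 (Zf x) * (\<Sum>i\<in>UNIV. AZ x $ i * Bv x $ i)"
    unfolding gp_def
    by (simp add: Pj_add Pj_diff Pj_scale E1[OF w] E2 sum_3 algebra_simps)
  also have "\<dots> = - 2 * (h1 (Zf x) - h (Zf x) * ub x)"
    using J_AA[OF x w] J_AB[OF x w] J_divA[OF x w] J_divB[OF x w] by (simp add: algebra_simps)
  finally show ?thesis .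
qed

theorem res:
  assumes x: "x \<in> S2" and xU: "x \<in> U"
  shows "slap (sdiv (\<lambda>y. cscale (h (Zf y)) (Yring y))) x + 2 * sdiv (\<lambda>y. cscale (h (Zf y)) (Yring y)) x = 0"
  unfolding slap_def L5[OF x xU] L3[OF x xU] by (simp add: algebra_simps)

end



lemma deriv_powi_c:
  fixes c z :: complex
  assumes "z \<noteq> 0"
  shows "((\<lambda>z. c * z powi j) has_field_derivative (c * of_int j * z powi (j - 1))) (at z)"
proof -
  have "((\<lambda>z. z powi j) has_field_derivative (of_int j * z powi (j - 1) * 1)) (at z)"
    by (rule DERIV_power_int[OF DERIV_ident]) (simp add: assms)
  from DERIV_cmult[OF this, of c] show ?thesis by (simp add: mult.assoc)
qed

lemma deriv_pow_c:
  fixes c z :: complex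
  shows "((\<lambda>z. c * z ^ j) has_field_derivative (c * of_nat j * z ^ (j - 1))) (at z)"
proof -
  have "((\<lambda>z. z ^ j) has_field_derivative (of_nat j * z ^ (j - 1))) (at z)"
    by (rule DERIV_cong[OF DERIV_power[OF DERIV_ident]]) simp
  from DERIV_cmult[OF this, of c] show ?thesis by (simp add: mult.assoc)
qed

lemma Zf_nz:
  assumes y: "y \<in> S2" and n: "y \<noteq> north" and s: "y \<noteq> south"
  shows "Zf y \<noteq> 0"
proof
  assume z: "Zf y = 0"
  have w: "ww y \<noteq> 0" using ww_nz[OF y n] .
  have "uu y = 0" using z w unfolding Zf_eq by simp
  then have "Re (uu y) = 0" "Im (uu y) = 0" by simp_all
  then have 12: "y$1 = 0" "y$2 = 0" by (simp_all add: uu_def)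
  then have "(y$3)^2 = 1" using S2_rel[OF y] by simp
  then have "y$3 = 1 \<or> y$3 = -1" by (simp add: power2_eq_1_iff)
  then have "y = north \<or> y = south"
    using 12 unfolding north_def south_def vec_eq_iff forall_3 by auto
  then show False using n s by blast
qed

theorem mainTheorem18:
  fixes m :: int and x :: "real^3"
  assumes "x \<in> S2 - {north}"
    and "m + 1 \<ge> 0 \<or> x \<noteq> south"
  shows "slap (sdiv (Yfield m)) x + 2 * sdiv (Yfield m) x = 0"
proof -
  have x: "x \<in> S2" and xn: "x \<noteq> north" using assms(1) by auto
  have Yeq: "Yfield m = (\<lambda>y. cscale (Zf y powi (m + 1)) (Yring y))"
    by (simp add: fun_eq_iff Yfield_def)
  show ?thesis
  proof (cases "m + 1 \<ge> 0")
    case True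
    define n where "n = nat (m + 1)"
    have mn: "m + 1 = int n" using True n_def by simp
    have Yeq2: "Yfield m = (\<lambda>y. cscale ((\<lambda>z. z ^ n) (Zf y)) (Yring y))"
      unfolding Yeq mn by (simp add: power_int_of_nat)
    interpret hol "\<lambda>z. z ^ n" "\<lambda>z. of_nat n * z ^ (n - 1)"
      "\<lambda>z. of_nat n * of_nat (n - 1) * z ^ (n - 1 - 1)"
      "\<lambda>z. of_nat n * of_nat (n - 1) * of_nat (n - 1 - 1) * z ^ (n - 1 - 1 - 1)" "- {north}"
    proof
      show "open (- {north})" by (simp add: open_Compl)
      show "north \<notin> - {north}" by simp
      fix y
      show "((\<lambda>z. z ^ n) has_field_derivative of_nat n * Zf y ^ (n - 1)) (at (Zf y))"
        using deriv_pow_c[of 1 n "Zf y"] by simp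
      show "((\<lambda>z. of_nat n * z ^ (n - 1)) has_field_derivative of_nat n * of_nat (n - 1) * Zf y ^ (n - 1 - 1)) (at (Zf y))"
        using deriv_pow_c[of "of_nat n" "n - 1" "Zf y"] by simp
      show "((\<lambda>z. of_nat n * of_nat (n - 1) * z ^ (n - 1 - 1)) has_field_derivative
          of_nat n * of_nat (n - 1) * of_nat (n - 1 - 1) * Zf y ^ (n - 1 - 1 - 1)) (at (Zf y))"
        using deriv_pow_c[of "of_nat n * of_nat (n - 1)" "n - 1 - 1" "Zf y"] by simp
    qed
    show ?thesis unfolding Yeq2 using res[OF x] xn by simp
  next
    case False
    then have xs: "x \<noteq> south" using assms(2) by simp
    define k where "k = m + 1"
    interpret hol "\<lambda>z. z powi k" "\<lambda>z. of_int k * z powi (k - 1)"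
      "\<lambda>z. of_int k * of_int (k - 1) * z powi (k - 1 - 1)"
      "\<lambda>z. of_int k * of_int (k - 1) * of_int (k - 1 - 1) * z powi (k - 1 - 1 - 1)" "- {north, south}"
    proof
      show "open (- {north, south})" by (simp add: open_Compl)
      show "north \<notin> - {north, south}" by simp
    next
      fix y assume y: "y \<in> S2" "y \<in> - {north, south}"
      then have z: "Zf y \<noteq> 0" using Zf_nz by blast
      show "((\<lambda>z. z powi k) has_field_derivative of_int k * Zf y powi (k - 1)) (at (Zf y))"
        using deriv_powi_c[OF z, of 1 k] by simp
    next
      fix y assume y: "y \<in> S2" "y \<in> - {north, south}"
      then have z: "Zf y \<noteq> 0" using Zf_nz by blast
      show "((\<lambda>z. of_int k * z powi (k - 1)) has_field_derivative of_int k * of_int (k - 1) * Zf y powi (k - 1 - 1)) (at (Zf y))"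
        using deriv_powi_c[OF z, of "of_int k" "k - 1"] by simp
    next
      fix y assume y: "y \<in> S2" "y \<in> - {north, south}"
      then have z: "Zf y \<noteq> 0" using Zf_nz by blast
      show "((\<lambda>z. of_int k * of_int (k - 1) * z powi (k - 1 - 1)) has_field_derivative
          of_int k * of_int (k - 1) * of_int (k - 1 - 1) * Zf y powi (k - 1 - 1 - 1)) (at (Zf y))"
        using deriv_powi_c[OF z, of "of_int k * of_int (k - 1)" "k - 1 - 1"] by simp
    qed
    show ?thesis unfolding Yeq k_def[symmetric] using res[OF x] xn xs by simp
  qed
qed


end
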